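(* Let $a,b>0$ and let $H=\frac12 f(p^2-a^2x^2,q^2-b^2y^2)$ on $\mathbb{R}^4$ (coordinates $(x,y,p,q)$), where $f$ is smooth with $f(0,0)=0$, $f_u(0,0)=f_v(0,0)=1$. Let $\mathbf v_1=(1,0,a,0)$, $\mathbf v_2=(0,1,0,-b)$, $\mathbf v_3=(1,0,-a,0)$, $\mathbf v_4=(0,1,0,b)$, and let $\phi_\pm:\mathbb{R}\to\mathbb{R}$ be $C^k$ ($k\ge1$) functions vanishing to order $l\le k$ at $0$. Then there are unique functions $\psi_\pm$ defined near $0$ such that the curves $\gamma_\pm(s)=s\mathbf v_1\pm s\mathbf v_2+\phi_\pm(s)\mathbf v_3+\psi_\pm(s)\mathbf v_4$ satisfy $H(\gamma_\pm(s))\equiv0$. Moreover $\psi_\pm$ are $C^k$ and vanish to order $l$ at $0$. In the case $H=\frac12(p^2+q^2-a^2x^2-b^2y^2)$, $\psi_\pm=\mp\frac{a^2}{b^2}\phi_\pm$.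
   Context: A function $\phi$ vanishes to order $l$ at $0$ ($l$ real) if $\phi(s)=\bar\phi(s)s^l$ with $\bar\phi$ $C^k$ on $\mathbb{R}\setminus\{0\}$ and $\frac{d^j}{ds^j}\bar\phi$ bounded on $[-1,1]\setminus\{0\}$ for $0\le j\le l$. *)

theory Defs
  imports "HOL-Analysis.Analysis"
begin

definition Ck_on :: "nat \<Rightarrow> real set \<Rightarrow> (real \<Rightarrow> real) \<Rightarrow> bool" where
  "Ck_on k U g \<longleftrightarrow>
     (\<forall>j<k. \<forall>x\<in>U. ((deriv ^^ j) g) differentiable (at x)) \<and>
     continuous_on U ((deriv ^^ k) g)"

definition pdu :: "(real \<Rightarrow> real \<Rightarrow> real) \<Rightarrow> real \<Rightarrow> real \<Rightarrow> real" where
  "pdu g = (\<lambda>u v. deriv (\<lambda>t. g t v) u)"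

definition pdv :: "(real \<Rightarrow> real \<Rightarrow> real) \<Rightarrow> real \<Rightarrow> real \<Rightarrow> real" where
  "pdv g = (\<lambda>u v. deriv (\<lambda>t. g u t) v)"

definition iter_pd :: "bool list \<Rightarrow> (real \<Rightarrow> real \<Rightarrow> real) \<Rightarrow> real \<Rightarrow> real \<Rightarrow> real" where
  "iter_pd ws g = foldr (\<lambda>w h. if w then pdu h else pdv h) ws g"

definition smooth2 :: "(real \<Rightarrow> real \<Rightarrow> real) \<Rightarrow> bool" where
  "smooth2 g \<longleftrightarrow>
     (\<forall>ws. continuous_on UNIV (\<lambda>z. iter_pd ws g (fst z) (snd z)) \<and>
           (\<forall>u v. (\<lambda>t. iter_pd ws g t v) differentiable (at u) \<and>
                  (\<lambda>t. iter_pd ws g u t) differentiable (at v)))"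

definition vanishes_to_order :: "nat \<Rightarrow> real \<Rightarrow> real set \<Rightarrow> (real \<Rightarrow> real) \<Rightarrow> bool" where
  "vanishes_to_order k l U g \<longleftrightarrow>
     (\<exists>gbar. (\<forall>s\<in>U - {0}. g s = gbar s * \<bar>s\<bar> powr l) \<and>
             Ck_on k (U - {0}) gbar \<and>
             (\<forall>j::nat. real j \<le> l \<longrightarrow>
                bounded (((deriv ^^ j) gbar) ` ((U \<inter> {-1..1}) - {0}))))"

definition Ham :: "real \<Rightarrow> real \<Rightarrow> (real \<Rightarrow> real \<Rightarrow> real) \<Rightarrow> real \<times> real \<times> real \<times> real \<Rightarrow> real" where
  "Ham a b f z = (case z of (x, y, p, q) \<Rightarrow> f (p\<^sup>2 - a\<^sup>2 * x\<^sup>2) (q\<^sup>2 - b\<^sup>2 * y\<^sup>2) / 2)"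

definition vv1 :: "real \<Rightarrow> real \<times> real \<times> real \<times> real" where "vv1 a = (1, 0, a, 0)"
definition vv2 :: "real \<Rightarrow> real \<times> real \<times> real \<times> real" where "vv2 b = (0, 1, 0, -b)"
definition vv3 :: "real \<Rightarrow> real \<times> real \<times> real \<times> real" where "vv3 a = (1, 0, -a, 0)"
definition vv4 :: "real \<Rightarrow> real \<times> real \<times> real \<times> real" where "vv4 b = (0, 1, 0, b)"

definition gam :: "real \<Rightarrow> real \<Rightarrow> real \<Rightarrow> (real \<Rightarrow> real) \<Rightarrow> (real \<Rightarrow> real) \<Rightarrow> real \<Rightarrow> real \<times> real \<times> real \<times> real" where
  "gam a b \<sigma> \<phi> \<psi> s = s *\<^sub>R vv1 a + (\<sigma> * s) *\<^sub>R vv2 b + \<phi> s *\<^sub>R vv3 a + \<psi> s *\<^sub>R vv4 b"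

end

theory Submission
  imports Defs "HOL-Analysis.Analysis"
begin

lemma rdiff_fd: "(f::real\<Rightarrow>real) differentiable at x \<Longrightarrow> f field_differentiable at x"
  by (metis DERIV_deriv_iff_real_differentiable field_differentiable_def)

lemma Ck_0: "Ck_on 0 U g \<longleftrightarrow> continuous_on U g"
  by (simp add: Ck_on_def)

lemma Ck_Suc: "Ck_on (Suc n) U g \<longleftrightarrow> (\<forall>x\<in>U. g differentiable at x) \<and> Ck_on n U (deriv g)"
proof -
  have e: "\<And>i. (deriv ^^ Suc i) g = (deriv ^^ i) (deriv g)" by (simp add: funpow_Suc_right del: funpow.simps)
  have A: "(\<forall>j<Suc n. Q j) = (Q 0 \<and> (\<forall>j<n. Q (Suc j)))" for Q :: "nat \<Rightarrow> bool"
    using less_Suc_eq_0_disj by auto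
  show ?thesis unfolding Ck_on_def A[of "\<lambda>j. \<forall>x\<in>U. (deriv ^^ j) g differentiable at x"] e funpow_0
    by blast
qed

lemma Ck_set_mono: "Ck_on n U g \<Longrightarrow> V \<subseteq> U \<Longrightarrow> Ck_on n V g"
  unfolding Ck_on_def by (meson continuous_on_subset subsetD)

lemma Ck_cong: assumes "open U" "\<And>x. x \<in> U \<Longrightarrow> g x = h x"
  shows "Ck_on n U g \<longleftrightarrow> Ck_on n U h"
proof -
  have ev: "\<forall>\<^sub>F y in nhds x. g y = h y" if "x \<in> U" for x
    unfolding eventually_nhds using assms that by blast
  have j: "(deriv ^^ j) g x = (deriv ^^ j) h x" if "x \<in> U" for x j
    using higher_deriv_cong_ev[OF ev[OF that] refl] .
  have d: "(deriv ^^ j) g differentiable at x \<longleftrightarrow> (deriv ^^ j) h differentiable at x" if "x \<in> U" for x j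
  proof -
    have ev2: "\<forall>\<^sub>F y in nhds x. (deriv ^^ j) g y = (deriv ^^ j) h y"
      unfolding eventually_nhds using assms that j by blast
    have "(\<exists>D. ((deriv ^^ j) g has_real_derivative D) (at x)) \<longleftrightarrow> (\<exists>D. ((deriv ^^ j) h has_real_derivative D) (at x))"
      using DERIV_cong_ev[OF refl ev2 refl] by simp
    then show ?thesis by (simp add: real_differentiable_def)
  qed
  have c: "continuous_on U ((deriv ^^ n) g) \<longleftrightarrow> continuous_on U ((deriv ^^ n) h)"
    by (rule continuous_on_cong[OF refl j])
  show ?thesis unfolding Ck_on_def using d c by auto
qed

lemma Ck_SucI: "open U \<Longrightarrow> (\<And>x. x \<in> U \<Longrightarrow> g differentiable at x) \<Longrightarrow> Ck_on n U d
   \<Longrightarrow> (\<And>x. x \<in> U \<Longrightarrow> deriv g x = d x) \<Longrightarrow> Ck_on (Suc n) U g"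
  unfolding Ck_Suc using Ck_cong[of U "deriv g" d n] by auto

lemma Ck_cont: assumes "Ck_on n U g" "j \<le> n" shows "continuous_on U ((deriv ^^ j) g)"
proof (cases "j < n")
  case True
  then have "\<forall>x\<in>U. (deriv ^^ j) g differentiable at x" using assms unfolding Ck_on_def by blast
  then show ?thesis
    by (intro continuous_at_imp_continuous_on) (auto intro: differentiable_imp_continuous_within)
next
  case False
  then have "j = n" using assms by simp
  then show ?thesis using assms unfolding Ck_on_def by simp
qed

lemma Ck_diff: "Ck_on (Suc n) U g \<Longrightarrow> x \<in> U \<Longrightarrow> g differentiable at x"
  by (simp add: Ck_Suc)

lemma Ck_mono: assumes "Ck_on n U g" "m \<le> n" shows "Ck_on m U g"
  using assms Ck_cont[OF assms] unfolding Ck_on_def by simp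

lemma Ck_const: "Ck_on n U (\<lambda>x. c)"
proof (induction n)
  case 0 then show ?case by (simp add: Ck_0)
next
  case (Suc n)
  have "Ck_on n U (\<lambda>x. 0)"
  proof (induction n)
    case (Suc n) then show ?case by (simp add: Ck_Suc)
  qed (simp add: Ck_0)
  then show ?case by (simp add: Ck_Suc)
qed

lemma Ck_id: "Ck_on n U (\<lambda>x. x)"
  by (cases n) (auto simp: Ck_Suc Ck_0 Ck_const)

lemma Ck_add: "open U \<Longrightarrow> Ck_on n U f \<Longrightarrow> Ck_on n U g \<Longrightarrow> Ck_on n U (\<lambda>x. f x + g x)"
proof (induction n arbitrary: f g)
  case 0 then show ?case by (simp add: Ck_0 continuous_on_add)
next
  case (Suc n)
  have C: "Ck_on n U (\<lambda>x. deriv f x + deriv g x)" using Suc by (simp add: Ck_Suc)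
  have D: "\<And>x. x \<in> U \<Longrightarrow> (\<lambda>x. f x + g x) differentiable at x"
    using Suc.prems by (intro differentiable_add) (auto simp: Ck_Suc)
  have E: "\<And>x. x \<in> U \<Longrightarrow> deriv (\<lambda>x. f x + g x) x = deriv f x + deriv g x"
    using Suc.prems by (simp add: Ck_Suc rdiff_fd)
  show ?case using Ck_SucI[OF Suc.prems(1) D C E] .
qed

lemma Ck_mult: "open U \<Longrightarrow> Ck_on n U f \<Longrightarrow> Ck_on n U g \<Longrightarrow> Ck_on n U (\<lambda>x. f x * g x)"
proof (induction n arbitrary: f g)
  case 0 then show ?case by (simp add: Ck_0 continuous_on_mult)
next
  case (Suc n)
  have fn: "Ck_on n U f" "Ck_on n U g" using Suc.prems Ck_mono by auto
  have C: "Ck_on n U (\<lambda>x. f x * deriv g x + deriv f x * g x)"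
    using Suc fn by (intro Ck_add) (auto simp: Ck_Suc)
  have D: "\<And>x. x \<in> U \<Longrightarrow> (\<lambda>x. f x * g x) differentiable at x"
    using Suc.prems by (intro differentiable_mult) (auto simp: Ck_Suc)
  have E: "\<And>x. x \<in> U \<Longrightarrow> deriv (\<lambda>x. f x * g x) x = f x * deriv g x + deriv f x * g x"
    using Suc.prems by (simp add: Ck_Suc rdiff_fd)
  show ?case using Ck_SucI[OF Suc.prems(1) D C E] .
qed

lemma Ck_cmult: "open U \<Longrightarrow> Ck_on n U f \<Longrightarrow> Ck_on n U (\<lambda>x. c * f x)"
  using Ck_mult[OF _ Ck_const] by blast

lemma Ck_minus: "open U \<Longrightarrow> Ck_on n U f \<Longrightarrow> Ck_on n U (\<lambda>x. - f x)"
  using Ck_cmult[of U n f "-1"] by simp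

lemma Ck_inverse: "open U \<Longrightarrow> Ck_on n U f \<Longrightarrow> (\<And>x. x \<in> U \<Longrightarrow> f x \<noteq> 0) \<Longrightarrow> Ck_on n U (\<lambda>x. inverse (f x))"
proof (induction n arbitrary: f)
  case 0 then show ?case by (simp add: Ck_0 continuous_on_inverse)
next
  case (Suc n)
  have fn: "Ck_on n U f" using Suc.prems Ck_mono by auto
  have I: "Ck_on n U (\<lambda>x. inverse (f x))" using Suc.IH[OF Suc.prems(1) fn Suc.prems(3)] .
  have C: "Ck_on n U (\<lambda>x. - deriv f x * (inverse (f x) * inverse (f x)))"
    using Suc.prems I by (intro Ck_mult Ck_minus) (auto simp: Ck_Suc)
  have E: "\<And>x. x \<in> U \<Longrightarrow> deriv (\<lambda>x. inverse (f x)) x = - deriv f x * (inverse (f x) * inverse (f x))"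
  proof -
    fix x assume x: "x \<in> U"
    have "f field_differentiable at x" using Suc.prems x by (auto simp: Ck_Suc intro: rdiff_fd)
    then have "deriv (\<lambda>x. inverse (f x)) x = - deriv f x / f x ^ 2"
      using Suc.prems(3)[OF x] by (rule deriv_inverse)
    then show "deriv (\<lambda>x. inverse (f x)) x = - deriv f x * (inverse (f x) * inverse (f x))"
      by (simp add: divide_inverse power2_eq_square)
  qed
  have D: "\<And>x. x \<in> U \<Longrightarrow> (\<lambda>x. inverse (f x)) differentiable at x"
    by (rule differentiable_inverse) (use Suc.prems in \<open>auto simp: Ck_Suc\<close>)
  show ?case using Ck_SucI[OF Suc.prems(1) D C E] .
qed

lemma Ck_compose: "open U \<Longrightarrow> open V \<Longrightarrow> Ck_on n V h \<Longrightarrow> Ck_on n U u \<Longrightarrow> u ` U \<subseteq> V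
   \<Longrightarrow> Ck_on n U (\<lambda>x. h (u x))"
proof (induction n arbitrary: h u)
  case 0 then show ?case unfolding Ck_0 by (intro continuous_on_compose2[of V h U u]) auto
next
  case (Suc n)
  have dh: "\<And>x. x \<in> U \<Longrightarrow> h differentiable at (u x)" using Suc.prems by (auto simp: Ck_Suc)
  have du: "\<And>x. x \<in> U \<Longrightarrow> u differentiable at x" using Suc.prems by (auto simp: Ck_Suc)
  have hn: "Ck_on n V (deriv h)" and un': "Ck_on n U (deriv u)" using Suc.prems by (auto simp: Ck_Suc)
  have un: "Ck_on n U u" using Ck_mono[OF Suc.prems(4)] by simp
  have C: "Ck_on n U (\<lambda>x. deriv h (u x) * deriv u x)"
    using Ck_mult[OF Suc.prems(1) Suc.IH[OF Suc.prems(1,2) hn un Suc.prems(5)] un'] .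
  have E: "\<And>x. x \<in> U \<Longrightarrow> deriv (\<lambda>x. h (u x)) x = deriv h (u x) * deriv u x"
    using real_derivative_chain[OF du dh] by (simp add: o_def)
  have D: "\<And>x. x \<in> U \<Longrightarrow> (\<lambda>x. h (u x)) differentiable at x"
    using differentiable_chain_at[OF du dh] by (simp add: o_def)
  show ?case using Ck_SucI[OF Suc.prems(1) D C E] .
qed



lemma iter_pd_T: "iter_pd (True # ws) f = pdu (iter_pd ws f)"
  and iter_pd_F: "iter_pd (False # ws) f = pdv (iter_pd ws f)"
  by (simp_all add: iter_pd_def)

lemma smooth2_cont: "smooth2 f \<Longrightarrow> continuous_on UNIV (\<lambda>z. iter_pd ws f (fst z) (snd z))"
  unfolding smooth2_def by blast

lemma smooth2_du: "smooth2 f \<Longrightarrow> ((\<lambda>t. iter_pd ws f t v) has_real_derivative pdu (iter_pd ws f) u v) (at u)"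
  unfolding smooth2_def pdu_def using DERIV_deriv_iff_real_differentiable by blast

lemma smooth2_dv: "smooth2 f \<Longrightarrow> ((\<lambda>t. iter_pd ws f u t) has_real_derivative pdv (iter_pd ws f) u v) (at v)"
  unfolding smooth2_def pdv_def using DERIV_deriv_iff_real_differentiable by blast

lemma frechet2:
  assumes "smooth2 f"
  shows "((\<lambda>(x, y). iter_pd ws f x y) has_derivative
          (\<lambda>(dx, dy). pdu (iter_pd ws f) x0 y0 * dx + pdv (iter_pd ws f) x0 y0 * dy)) (at (x0, y0))"
proof -
  let ?F = "iter_pd ws f"
  have fx: "((\<lambda>x. ?F x y0) has_derivative (\<lambda>dx. pdu ?F x0 y0 * dx)) (at x0 within UNIV)"
    using smooth2_du[OF assms] unfolding has_field_derivative_def by simp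
  have fy: "((\<lambda>y. ?F x y) has_derivative blinfun_apply (blinfun_mult_right (pdv ?F x y))) (at y within UNIV)"
    if "x \<in> UNIV" "y \<in> UNIV" for x y
    using smooth2_dv[OF assms] unfolding has_field_derivative_def by simp
  have c0: "continuous_on UNIV (\<lambda>z. iter_pd (False # ws) f (fst z) (snd z))"
    by (rule smooth2_cont[OF assms])
  have c1: "continuous_on UNIV (\<lambda>z. blinfun_mult_right (iter_pd (False # ws) f (fst z) (snd z)))"
    using c0 by (intro continuous_intros)
  have "continuous (at (x0, y0) within UNIV \<times> UNIV) (\<lambda>(x, y). blinfun_mult_right (pdv ?F x y))"
  proof -
    have eq: "(\<lambda>(x, y). blinfun_mult_right (pdv ?F x y)) = (\<lambda>z. blinfun_mult_right (pdv ?F (fst z) (snd z)))"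
      by (auto simp: fun_eq_iff split: prod.splits)
    show ?thesis unfolding eq using c1 unfolding iter_pd_F by (simp add: continuous_on_eq_continuous_within)
  qed
  from has_derivative_partialsI[OF fx fy this]
  show ?thesis by simp
qed

lemma chain2:
  assumes "smooth2 f" "(\<alpha>::real\<Rightarrow>real) differentiable at t" "(\<beta>::real\<Rightarrow>real) differentiable at t"
  shows "((\<lambda>s. iter_pd ws f (\<alpha> s) (\<beta> s)) has_real_derivative
      (pdu (iter_pd ws f) (\<alpha> t) (\<beta> t) * deriv \<alpha> t + pdv (iter_pd ws f) (\<alpha> t) (\<beta> t) * deriv \<beta> t)) (at t)"
proof -
  have da: "(\<alpha> has_derivative (\<lambda>h. deriv \<alpha> t * h)) (at t)"
    using assms(2) DERIV_deriv_iff_real_differentiable has_field_derivative_def by (metis)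
  have db: "(\<beta> has_derivative (\<lambda>h. deriv \<beta> t * h)) (at t)"
    using assms(3) DERIV_deriv_iff_real_differentiable has_field_derivative_def by (metis)
  have p: "((\<lambda>s. (\<alpha> s, \<beta> s)) has_derivative (\<lambda>h. (deriv \<alpha> t * h, deriv \<beta> t * h))) (at t)"
    by (rule has_derivative_Pair[OF da db])
  have c: "((\<lambda>s. (\<lambda>(x, y). iter_pd ws f x y) (\<alpha> s, \<beta> s)) has_derivative
     (\<lambda>h. (\<lambda>(dx, dy). pdu (iter_pd ws f) (\<alpha> t) (\<beta> t) * dx + pdv (iter_pd ws f) (\<alpha> t) (\<beta> t) * dy)
        (deriv \<alpha> t * h, deriv \<beta> t * h))) (at t)"
    by (rule has_derivative_compose[OF p frechet2[OF assms(1)]])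
  show ?thesis unfolding has_field_derivative_def
    by (rule has_derivative_eq_rhs[OF c[simplified]]) (auto simp: algebra_simps)
qed

lemma Ck_comp2:
  assumes "smooth2 f" "open U"
  shows "Ck_on n U \<alpha> \<Longrightarrow> Ck_on n U \<beta> \<Longrightarrow> Ck_on n U (\<lambda>t. iter_pd ws f (\<alpha> t) (\<beta> t))"
proof (induction n arbitrary: ws \<alpha> \<beta>)
  case 0
  have c: "continuous_on U (\<lambda>t. (\<alpha> t, \<beta> t))" using 0 by (simp add: Ck_0 continuous_on_Pair)
  have "continuous_on U (\<lambda>t. (\<lambda>z. iter_pd ws f (fst z) (snd z)) (\<alpha> t, \<beta> t))"
    by (rule continuous_on_compose2[OF smooth2_cont[OF assms(1)] c]) auto
  then show ?case by (simp add: Ck_0)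
next
  case (Suc n)
  have da: "\<And>x. x \<in> U \<Longrightarrow> \<alpha> differentiable at x" and db: "\<And>x. x \<in> U \<Longrightarrow> \<beta> differentiable at x"
    using Suc.prems by (auto simp: Ck_Suc)
  have an: "Ck_on n U \<alpha>" and bn: "Ck_on n U \<beta>" using Suc.prems Ck_mono by auto
  have an': "Ck_on n U (deriv \<alpha>)" and bn': "Ck_on n U (deriv \<beta>)" using Suc.prems by (auto simp: Ck_Suc)
  have C: "Ck_on n U (\<lambda>t. iter_pd (True # ws) f (\<alpha> t) (\<beta> t) * deriv \<alpha> t + iter_pd (False # ws) f (\<alpha> t) (\<beta> t) * deriv \<beta> t)"
    using Ck_add[OF assms(2) Ck_mult[OF assms(2) Suc.IH[OF an bn] an'] Ck_mult[OF assms(2) Suc.IH[OF an bn] bn']] .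
  have E: "\<And>x. x \<in> U \<Longrightarrow> deriv (\<lambda>t. iter_pd ws f (\<alpha> t) (\<beta> t)) x =
     iter_pd (True # ws) f (\<alpha> x) (\<beta> x) * deriv \<alpha> x + iter_pd (False # ws) f (\<alpha> x) (\<beta> x) * deriv \<beta> x"
    unfolding iter_pd_T iter_pd_F using chain2[OF assms(1) da db] by (rule DERIV_imp_deriv)
  have D: "\<And>x. x \<in> U \<Longrightarrow> (\<lambda>t. iter_pd ws f (\<alpha> t) (\<beta> t)) differentiable at x"
    using chain2[OF assms(1) da db] real_differentiable_def by blast
  show ?case using Ck_SucI[OF assms(2) D C E] .
qed



lemma iter_pd_Nil: "iter_pd [] f = f" by (simp add: iter_pd_def)

lemma cont_u: "smooth2 f \<Longrightarrow> continuous_on UNIV (\<lambda>u. f u c)"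
proof -
  assume sm: "smooth2 f"
  have "continuous_on UNIV (\<lambda>u. (\<lambda>z. iter_pd [] f (fst z) (snd z)) (u, c))"
    by (rule continuous_on_compose2[OF smooth2_cont[OF sm]]) (auto intro: continuous_intros)
  then show ?thesis by (simp add: iter_pd_Nil)
qed

lemma f_dv: "smooth2 f \<Longrightarrow> ((\<lambda>t. f u t) has_real_derivative pdv f u v) (at v)"
  using smooth2_dv[of f "[]"] by (simp add: iter_pd_Nil)

lemma implicit:
  assumes sm: "smooth2 f" and f0: "f 0 0 = 0" and fv0: "pdv f 0 0 = 1"
  obtains \<rho> r g where "\<rho> > 0" "r > 0" "\<rho> \<le> r"
    "\<And>u. \<bar>u\<bar> < \<rho> \<Longrightarrow> f u (g u) = 0"
    "\<And>u v. \<bar>u\<bar> < \<rho> \<Longrightarrow> \<bar>v\<bar> \<le> r \<Longrightarrow> f u v = 0 \<Longrightarrow> v = g u"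
    "\<And>n. Ck_on n (ball 0 \<rho>) g" "g 0 = 0" "deriv g 0 = - pdu f 0 0"
proof -
  define fvz where "fvz = (\<lambda>z::real\<times>real. pdv f (fst z) (snd z))"
  have cfv: "continuous_on UNIV fvz"
    using smooth2_cont[OF sm, of "[False]"] by (simp add: fvz_def iter_pd_F iter_pd_Nil)
  have "open {z. 1/2 < fvz z}" by (rule open_Collect_less[OF continuous_on_const cfv])
  moreover have "(0,0) \<in> {z. 1/2 < fvz z}" using fv0 by (simp add: fvz_def)
  ultimately obtain e where e: "e > 0" "ball (0,0) e \<subseteq> {z. 1/2 < fvz z}" by (meson openE)
  define r where "r = e / 3"
  have r: "r > 0" using e by (simp add: r_def)
  have fvpos: "1/2 < pdv f u v" if "\<bar>u\<bar> \<le> r" "\<bar>v\<bar> \<le> r" for u v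
  proof -
    have "norm (u, v) \<le> norm u + norm v" by (rule norm_Pair_le)
    also have "\<dots> < e" using that r_def e by simp
    finally have "(u, v) \<in> ball (0,0) e" by (simp add: dist_norm norm_Pair)
    then show ?thesis using e by (auto simp: fvz_def)
  qed
  have mono: "(v2 - v1) / 2 \<le> f u v2 - f u v1"
    if hyp: "\<bar>u\<bar> \<le> r" "- r \<le> v1" "v1 < v2" "v2 \<le> r" for u v1 v2
  proof -
    obtain z where z: "v1 < z" "z < v2" "f u v2 - f u v1 = (v2 - v1) * pdv f u z"
      using MVT2[OF hyp(3), of "\<lambda>t. f u t" "\<lambda>t. pdv f u t"] f_dv[OF sm] by blast
    have "1/2 < pdv f u z" using fvpos[of u z] hyp z by auto
    then have "(v2 - v1) * (1/2) \<le> (v2 - v1) * pdv f u z" using hyp(3) by (intro mult_left_mono) auto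
    then show ?thesis using z by simp
  qed
  have smono: "f u v1 < f u v2" if "\<bar>u\<bar> \<le> r" "- r \<le> v1" "v1 < v2" "v2 \<le> r" for u v1 v2
    using mono[OF that] that(3) by (smt (verit) half_gt_zero)
  have fr: "0 < f 0 r" using smono[of 0 0 r] r f0 by simp
  have fmr: "f 0 (-r) < 0" using smono[of 0 "-r" 0] r f0 by simp
  have "open ({u. 0 < f u r} \<inter> {u. f u (-r) < 0})"
    by (intro open_Int open_Collect_less continuous_on_const cont_u[OF sm])
  moreover have "0 \<in> {u. 0 < f u r} \<inter> {u. f u (-r) < 0}" using fr fmr by simp
  ultimately obtain \<rho>1 where \<rho>1: "\<rho>1 > 0" "ball 0 \<rho>1 \<subseteq> {u. 0 < f u r} \<inter> {u. f u (-r) < 0}"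
    by (meson openE)
  define \<rho> where "\<rho> = min \<rho>1 r"
  have \<rho>: "\<rho> > 0" "\<rho> \<le> r" using \<rho>1 r by (auto simp: \<rho>_def)
  have sgn: "0 < f u r" "f u (-r) < 0" if "\<bar>u\<bar> < \<rho>" for u
    using that \<rho>1 by (auto simp: \<rho>_def dist_real_def subset_iff)
  have ex: "\<exists>v. \<bar>v\<bar> \<le> r \<and> f u v = 0" if "\<bar>u\<bar> < \<rho>" for u
  proof -
    have "\<exists>x. - r \<le> x \<and> x \<le> r \<and> f u x = 0"
      using sgn[OF that] r
      by (intro IVT[of "\<lambda>t. f u t"]) (auto intro: DERIV_isCont[OF f_dv[OF sm]])
    then show ?thesis by (metis abs_le_iff minus_le_iff)
  qed
  have uniq: "v = w" if "\<bar>u\<bar> < \<rho>" "\<bar>v\<bar> \<le> r" "\<bar>w\<bar> \<le> r" "f u v = 0" "f u w = 0" for u v w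
  proof -
    have "\<bar>u\<bar> \<le> r" using that \<rho> by simp
    then show ?thesis using smono[of u v w] smono[of u w v] that
      by (metis abs_le_iff linorder_neqE_linordered_idom minus_le_iff order_less_irrefl)
  qed
  define g where "g u = (THE v. \<bar>v\<bar> \<le> r \<and> f u v = 0)" for u
  have gprop: "\<bar>g u\<bar> \<le> r \<and> f u (g u) = 0" if hu: "\<bar>u\<bar> < \<rho>" for u
  proof -
    obtain v where v: "\<bar>v\<bar> \<le> r" "f u v = 0" using ex[OF hu] by blast
    have "g u = v" unfolding g_def
      by (rule the_equality) (use v uniq[OF hu] in auto)
    then show ?thesis using v by simp
  qed
  have U1: "v = g u" if "\<bar>u\<bar> < \<rho>" "\<bar>v\<bar> \<le> r" "f u v = 0" for u v
    using uniq[OF that(1,2) _ that(3)] gprop[OF that(1)] by blast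
  have ginside: "\<bar>g u\<bar> < r" if "\<bar>u\<bar> < \<rho>" for u
  proof -
    have "g u \<noteq> r" "g u \<noteq> -r" using gprop[OF that] sgn[OF that] by auto
    then show ?thesis using gprop[OF that] by auto
  qed
  have U2: "g u < v" if "\<bar>u\<bar> < \<rho>" "\<bar>v\<bar> \<le> r" "0 < f u v" for u v
  proof (rule ccontr)
    assume "\<not> g u < v"
    then have "v < g u \<or> v = g u" by auto
    moreover have "\<bar>u\<bar> \<le> r" using that \<rho> by simp
    ultimately show False using smono[of u v "g u"] gprop[OF that(1)] that by (auto simp: abs_le_iff)
  qed
  have U3: "v < g u" if "\<bar>u\<bar> < \<rho>" "\<bar>v\<bar> \<le> r" "f u v < 0" for u v
  proof (rule ccontr)
    assume "\<not> v < g u"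
    then have "g u < v \<or> v = g u" by auto
    moreover have "\<bar>u\<bar> \<le> r" using that \<rho> by simp
    ultimately show False using smono[of u "g u" v] gprop[OF that(1)] that by (auto simp: abs_le_iff)
  qed
  have gcont: "isCont g u0" if u0: "\<bar>u0\<bar> < \<rho>" for u0
    unfolding continuous_at_eps_delta
  proof (intro allI impI)
    fix \<epsilon> :: real assume "\<epsilon> > 0"
    define v0 where "v0 = g u0"
    have v0: "\<bar>v0\<bar> < r" "f u0 v0 = 0" using ginside[OF u0] gprop[OF u0] by (auto simp: v0_def)
    define \<epsilon>' where "\<epsilon>' = min \<epsilon> ((r - \<bar>v0\<bar>) / 2)"
    have e1a: "\<epsilon>' > 0" using \<open>\<epsilon> > 0\<close> v0 by (simp add: \<epsilon>'_def)
    have e1b: "\<epsilon>' \<le> \<epsilon>" unfolding \<epsilon>'_def by (rule min.cobounded1)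
    have e1c: "\<epsilon>' \<le> (r - \<bar>v0\<bar>) / 2" unfolding \<epsilon>'_def by (rule min.cobounded2)
    note e1 = e1a e1b e1c
    have \<epsilon>': "\<epsilon>' > 0" "\<epsilon>' \<le> \<epsilon>" "\<bar>v0 + \<epsilon>'\<bar> \<le> r" "\<bar>v0 - \<epsilon>'\<bar> \<le> r"
      using e1 v0(1) by (auto simp: abs_le_iff abs_less_iff)
    have u0r: "\<bar>u0\<bar> \<le> r" using u0 \<rho> by simp
    have p1: "0 < f u0 (v0 + \<epsilon>')" using smono[of u0 v0 "v0 + \<epsilon>'"] v0 \<epsilon>' u0r by (auto simp: abs_le_iff)
    have p2: "f u0 (v0 - \<epsilon>') < 0" using smono[of u0 "v0 - \<epsilon>'" v0] v0 \<epsilon>' u0r by (auto simp: abs_le_iff)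
    let ?S = "{u. 0 < f u (v0 + \<epsilon>')} \<inter> {u. f u (v0 - \<epsilon>') < 0} \<inter> ball 0 \<rho>"
    have "open ?S"
      by (intro open_Int open_Collect_less continuous_on_const cont_u[OF sm] open_ball)
    moreover have "u0 \<in> ?S" using p1 p2 u0 by simp
    ultimately obtain \<delta> where \<delta>: "\<delta> > 0" "ball u0 \<delta> \<subseteq> ?S" by (meson openE)
    show "\<exists>\<delta>>0. \<forall>x'. dist x' u0 < \<delta> \<longrightarrow> dist (g x') (g u0) < \<epsilon>"
    proof (intro exI[of _ \<delta>] conjI allI impI)
      fix x' assume "dist x' u0 < \<delta>"
      then have "x' \<in> ?S" using \<delta> by (auto simp: dist_commute)
      then have x': "\<bar>x'\<bar> < \<rho>" "0 < f x' (v0 + \<epsilon>')" "f x' (v0 - \<epsilon>') < 0" by auto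
      have "g x' < v0 + \<epsilon>'" using U2[OF x'(1) \<epsilon>'(3) x'(2)] .
      moreover have "v0 - \<epsilon>' < g x'" using U3[OF x'(1) \<epsilon>'(4) x'(3)] .
      ultimately show "dist (g x') (g u0) < \<epsilon>" using \<epsilon>' by (auto simp: dist_real_def v0_def)
    qed (use \<delta> in auto)
  qed
  have gder: "(g has_real_derivative (- pdu f u0 (g u0) / pdv f u0 (g u0))) (at u0)" if u0: "\<bar>u0\<bar> < \<rho>" for u0
  proof -
    define v0 where "v0 = g u0"
    define A where "A = pdu f u0 v0"
    define B where "B = pdv f u0 v0"
    have v0: "\<bar>v0\<bar> \<le> r" "f u0 v0 = 0" using gprop[OF u0] by (auto simp: v0_def)
    have B: "B > 1/2" using fvpos[of u0 v0] u0 \<rho> v0 by (simp add: B_def)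
    have fr2: "((\<lambda>(x, y). f x y) has_derivative (\<lambda>(dx, dy). A * dx + B * dy)) (at (u0, v0))"
      using frechet2[OF sm, of "[]" u0 v0] by (simp add: iter_pd_Nil A_def B_def)
    then have H: "\<forall>e>0. \<exists>d>0. \<forall>y. norm (y - (u0, v0)) < d \<longrightarrow>
        norm ((\<lambda>(x, y). f x y) y - (\<lambda>(x, y). f x y) (u0, v0) - (\<lambda>(dx, dy). A * dx + B * dy) (y - (u0, v0)))
          \<le> e * norm (y - (u0, v0))"
      unfolding has_derivative_at_alt by blast
    define K where "K = 2 * (\<bar>A\<bar> + B) / B"
    have K: "K \<ge> 0" using B by (simp add: K_def)
    have "((\<lambda>y. (g y - g u0) / (y - u0)) \<longlongrightarrow> - A / B) (at u0)"
      unfolding LIM_eq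
    proof (intro allI impI)
      fix \<epsilon> :: real assume \<epsilon>: "\<epsilon> > 0"
      define e where "e = min (B / 2) (\<epsilon> * B / (2 * (1 + K)))"
      have ea: "e > 0" using B \<epsilon> K by (simp add: e_def)
      have eb: "e \<le> B / 2" unfolding e_def by (rule min.cobounded1)
      have "e \<le> \<epsilon> * B / (2 * (1 + K))" unfolding e_def by (rule min.cobounded2)
      then have "e * (1 + K) \<le> \<epsilon> * B / (2 * (1 + K)) * (1 + K)" using K by (intro mult_right_mono) auto
      also have "\<dots> = \<epsilon> * B / 2" using K by (simp add: field_simps)
      finally have ec: "e * (1 + K) \<le> \<epsilon> * B / 2" .
      note e = ea eb ec
      obtain d where d: "d > 0" and dH: "\<And>y. norm (y - (u0, v0)) < d \<Longrightarrow>
        norm ((\<lambda>(x, y). f x y) y - (\<lambda>(x, y). f x y) (u0, v0) - (\<lambda>(dx, dy). A * dx + B * dy) (y - (u0, v0)))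
          \<le> e * norm (y - (u0, v0))"
        using H e(1) by blast
      obtain \<delta>1 where \<delta>1: "\<delta>1 > 0" "\<And>x. dist x u0 < \<delta>1 \<Longrightarrow> dist (g x) (g u0) < d / 2"
        using gcont[OF u0] d unfolding continuous_at_eps_delta by (meson half_gt_zero)
      define \<delta> where "\<delta> = min (min \<delta>1 (d / 2)) (\<rho> - \<bar>u0\<bar>)"
      have "\<delta> > 0" using \<delta>1 d u0 by (simp add: \<delta>_def)
      moreover have "\<bar>(g x - g u0) / (x - u0) - - A / B\<bar> < \<epsilon>" if x: "x \<noteq> u0" "norm (x - u0) < \<delta>" for x
      proof -
        define du where "du = x - u0"
        define dv where "dv = g x - v0"
        have du0: "du \<noteq> 0" using x by (simp add: du_def)
        have "\<bar>x - u0\<bar> < \<rho> - \<bar>u0\<bar>" using x by (simp add: \<delta>_def)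
        then have xr: "\<bar>x\<bar> < \<rho>" by (smt (verit))
        have dud: "\<bar>du\<bar> < d / 2" using x by (simp add: \<delta>_def du_def)
        have dvd: "\<bar>dv\<bar> < d / 2" using \<delta>1(2)[of x] x by (simp add: \<delta>_def dist_real_def dv_def v0_def)
        have nle: "norm (du, dv) \<le> \<bar>du\<bar> + \<bar>dv\<bar>" using norm_Pair_le[of du dv] by simp
        have "norm ((x, g x) - (u0, v0)) < d" using nle dud dvd by (simp add: du_def dv_def)
        from dH[OF this] have "\<bar>f x (g x) - f u0 v0 - (A * du + B * dv)\<bar> \<le> e * norm (du, dv)"
          by (simp add: du_def dv_def)
        then have i0: "\<bar>A * du + B * dv\<bar> \<le> e * norm (du, dv)" using gprop[OF xr] v0 by simp
        have i1: "\<bar>A * du + B * dv\<bar> \<le> e * \<bar>du\<bar> + e * \<bar>dv\<bar>"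
          using i0 mult_left_mono[OF nle, of e] e(1) by (simp add: algebra_simps)
        have i2: "B * \<bar>dv\<bar> \<le> \<bar>A * du + B * dv\<bar> + \<bar>A\<bar> * \<bar>du\<bar>"
        proof -
          have "B * \<bar>dv\<bar> = \<bar>(A * du + B * dv) - A * du\<bar>" using B by (simp add: abs_mult)
          also have "\<dots> \<le> \<bar>A * du + B * dv\<bar> + \<bar>A * du\<bar>" by (rule abs_triangle_ineq4)
          finally show ?thesis by (simp add: abs_mult)
        qed
        have i3: "(B / 2) * \<bar>dv\<bar> \<le> (B + \<bar>A\<bar>) * \<bar>du\<bar>"
        proof -
          have "e * \<bar>dv\<bar> \<le> (B / 2) * \<bar>dv\<bar>" using e(2) by (intro mult_right_mono) auto
          moreover have "e * \<bar>du\<bar> \<le> B * \<bar>du\<bar>" using e(2) B by (intro mult_right_mono) auto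
          ultimately show ?thesis using i1 i2 by (simp add: algebra_simps)
        qed
        have i4: "\<bar>dv\<bar> \<le> K * \<bar>du\<bar>"
        proof -
          have "\<bar>dv\<bar> = (2 / B) * ((B / 2) * \<bar>dv\<bar>)" using B by simp
          also have "\<dots> \<le> (2 / B) * ((B + \<bar>A\<bar>) * \<bar>du\<bar>)" using i3 B by (intro mult_left_mono) auto
          also have "\<dots> = K * \<bar>du\<bar>" using B by (simp add: K_def field_simps)
          finally show ?thesis .
        qed
        have i5: "\<bar>A * du + B * dv\<bar> \<le> e * (1 + K) * \<bar>du\<bar>"
        proof -
          have "e * \<bar>dv\<bar> \<le> e * (K * \<bar>du\<bar>)" using i4 e(1) by (intro mult_left_mono) auto
          then show ?thesis using i1 by (simp add: algebra_simps)
        qed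
        have i6: "\<bar>A * du + B * dv\<bar> < \<epsilon> * B * \<bar>du\<bar>"
        proof -
          have "e * (1 + K) * \<bar>du\<bar> \<le> (\<epsilon> * B / 2) * \<bar>du\<bar>" using e(3) by (intro mult_right_mono) auto
          moreover have "(\<epsilon> * B / 2) * \<bar>du\<bar> < \<epsilon> * B * \<bar>du\<bar>" using \<epsilon> B du0 by simp
          ultimately show ?thesis using i5 by linarith
        qed
        have eq: "(g x - g u0) / (x - u0) - - A / B = (A * du + B * dv) / (B * du)"
          using du0 B by (simp add: du_def dv_def v0_def field_simps)
        have "\<bar>(A * du + B * dv) / (B * du)\<bar> = \<bar>A * du + B * dv\<bar> / (B * \<bar>du\<bar>)"
          using B by (simp add: abs_mult)
        also have "\<dots> < \<epsilon>" using i6 B du0 by (simp add: divide_less_eq mult.commute mult.left_commute)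
        finally show ?thesis using eq by simp
      qed
      ultimately show "\<exists>s>0. \<forall>x. x \<noteq> u0 \<and> norm (x - u0) < s \<longrightarrow> norm ((g x - g u0) / (x - u0) - - A / B) < \<epsilon>"
        by auto
    qed
    then show ?thesis unfolding has_field_derivative_iff A_def B_def v0_def by simp
  qed
  have ball_iff: "u \<in> ball 0 \<rho> \<longleftrightarrow> \<bar>u\<bar> < \<rho>" for u by (simp add: dist_real_def)
  have ob: "open (ball (0::real) \<rho>)" by simp
  have gCk: "Ck_on n (ball 0 \<rho>) g" for n
  proof (induction n)
    case 0
    show ?case unfolding Ck_0
      by (intro continuous_at_imp_continuous_on) (auto simp: ball_iff intro: gcont)
  next
    case (Suc n)
    have D: "\<And>x. x \<in> ball 0 \<rho> \<Longrightarrow> g differentiable at x"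
      using gder unfolding ball_iff real_differentiable_def by blast
    have nz: "\<And>x. x \<in> ball 0 \<rho> \<Longrightarrow> iter_pd [False] f (id x) (g x) \<noteq> 0"
    proof -
      fix x :: real assume "x \<in> ball 0 \<rho>"
      then have "\<bar>x\<bar> < \<rho>" by (simp add: ball_iff)
      then have "1/2 < pdv f x (g x)" using fvpos[of x "g x"] gprop[of x] \<rho> by simp
      then show "iter_pd [False] f (id x) (g x) \<noteq> 0" by (simp add: iter_pd_F iter_pd_Nil)
    qed
    have idn: "Ck_on n (ball 0 \<rho>) id" using Ck_id[of n "ball 0 \<rho>"] by (simp add: id_def)
    have C: "Ck_on n (ball 0 \<rho>) (\<lambda>x. - iter_pd [True] f (id x) (g x) * inverse (iter_pd [False] f (id x) (g x)))"
      by (intro Ck_mult[OF ob] Ck_minus[OF ob] Ck_inverse[OF ob] Ck_comp2[OF sm ob idn Suc.IH] nz)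
    have E: "\<And>x. x \<in> ball 0 \<rho> \<Longrightarrow> deriv g x = - iter_pd [True] f (id x) (g x) * inverse (iter_pd [False] f (id x) (g x))"
    proof -
      fix x :: real assume "x \<in> ball 0 \<rho>"
      then have "\<bar>x\<bar> < \<rho>" by (simp add: ball_iff)
      from DERIV_imp_deriv[OF gder[OF this]] show "deriv g x = - iter_pd [True] f (id x) (g x) * inverse (iter_pd [False] f (id x) (g x))"
        by (simp add: iter_pd_T iter_pd_F iter_pd_Nil divide_inverse)
    qed
    show ?case using Ck_SucI[OF ob D C E] .
  qed
  have g0: "g 0 = 0" using U1[of 0 0] \<rho> r f0 by simp
  have dg0: "deriv g 0 = - pdu f 0 0"
    using DERIV_imp_deriv[OF gder[of 0]] \<rho> g0 fv0 by simp
  show ?thesis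
    by (rule that[OF \<rho>(1) r \<rho>(2) _ U1 gCk g0 dg0]) (use gprop in auto)
qed



lemma ball_mult_in: "x \<in> ball (0::real) \<rho> \<Longrightarrow> t \<in> {0..1} \<Longrightarrow> t * x \<in> ball 0 \<rho>"
proof -
  assume x: "x \<in> ball (0::real) \<rho>" and t: "t \<in> {0..1}"
  have "\<bar>t * x\<bar> \<le> \<bar>x\<bar>" using t by (simp add: abs_mult mult_left_le_one_le)
  then show ?thesis using x by (simp add: dist_real_def)
qed

lemma contparam:
  fixes H :: "real \<Rightarrow> real"
  assumes "continuous_on (ball 0 \<rho>) H"
  shows "continuous_on (ball 0 \<rho> \<times> cbox 0 1) (\<lambda>(x, t). t ^ m * H (t * x))"
proof -
  have c1: "continuous_on (ball 0 \<rho> \<times> cbox 0 1) (\<lambda>z::real\<times>real. snd z ^ m)"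
    by (intro continuous_intros)
  have c2: "continuous_on (ball 0 \<rho> \<times> cbox 0 1) (\<lambda>z::real\<times>real. H (snd z * fst z))"
    by (rule continuous_on_compose2[OF assms]) (auto intro!: continuous_intros ball_mult_in simp: cbox_interval)
  have "continuous_on (ball 0 \<rho> \<times> cbox 0 1) (\<lambda>z::real\<times>real. snd z ^ m * H (snd z * fst z))"
    using continuous_on_mult[OF c1 c2] .
  moreover have "(\<lambda>(x, t). t ^ m * H (t * x)) = (\<lambda>z::real\<times>real. snd z ^ m * H (snd z * fst z))"
    by (auto simp: fun_eq_iff)
  ultimately show ?thesis by simp
qed

lemma Ck_integral:
  fixes G :: "real \<Rightarrow> real"
  shows "Ck_on n (ball 0 \<rho>) G \<Longrightarrow> Ck_on n (ball 0 \<rho>) (\<lambda>x. integral {0..1} (\<lambda>t. t ^ m * G (t * x)))"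
proof (induction n arbitrary: G m)
  case 0
  have "continuous_on (ball 0 \<rho>) (\<lambda>x. integral (cbox 0 1) (\<lambda>t. t ^ m * G (t * x)))"
    using integral_continuous_on_param[OF contparam[of \<rho> G m]] 0 by (simp add: Ck_0)
  then show ?case by (simp add: Ck_0 cbox_interval)
next
  case (Suc n)
  have ob: "open (ball (0::real) \<rho>)" by simp
  have dG: "\<And>y. y \<in> ball 0 \<rho> \<Longrightarrow> (G has_real_derivative deriv G y) (at y)"
    using Suc.prems by (auto simp: Ck_Suc DERIV_deriv_iff_real_differentiable)
  have cdG: "continuous_on (ball 0 \<rho>) (deriv G)"
    using Suc.prems Ck_cont[of n _ "deriv G" 0] by (auto simp: Ck_Suc)
  have cG: "continuous_on (ball 0 \<rho>) G"
    using Suc.prems Ck_cont[of "Suc n" _ G 0] by auto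
  have der: "((\<lambda>x. integral {0..1} (\<lambda>t. t ^ m * G (t * x))) has_real_derivative
        integral {0..1} (\<lambda>t. t ^ Suc m * deriv G (t * x))) (at x)" if x: "x \<in> ball 0 \<rho>" for x
  proof -
    have fx: "((\<lambda>x. t ^ m * G (t * x)) has_real_derivative t ^ Suc m * deriv G (t * y)) (at y within ball 0 \<rho>)"
      if "y \<in> ball 0 \<rho>" "t \<in> cbox 0 1" for y t
    proof -
      have "t * y \<in> ball 0 \<rho>" using that ball_mult_in by (simp add: cbox_interval)
      from DERIV_chain2[OF dG[OF this] DERIV_cmult_Id[of t y]]
      have "((\<lambda>x. G (t * x)) has_real_derivative deriv G (t * y) * t) (at y)" .
      from DERIV_cmult[OF this, of "t ^ m"]
      have "((\<lambda>x. t ^ m * G (t * x)) has_real_derivative t ^ Suc m * deriv G (t * y)) (at y)"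
        by (rule DERIV_cong) (simp add: algebra_simps)
      then show ?thesis by (rule has_field_derivative_at_within)
    qed
    have int: "(\<lambda>t. t ^ m * G (t * y)) integrable_on cbox 0 1" if "y \<in> ball 0 \<rho>" for y
    proof (rule integrable_continuous)
      show "continuous_on (cbox 0 1) (\<lambda>t. t ^ m * G (t * y))"
        by (intro continuous_intros continuous_on_compose2[OF cG]) (auto simp: cbox_interval intro: ball_mult_in that)
    qed
    have "((\<lambda>x. integral (cbox 0 1) (\<lambda>t. t ^ m * G (t * x))) has_real_derivative
        integral (cbox 0 1) (\<lambda>t. t ^ Suc m * deriv G (t * x))) (at x within ball 0 \<rho>)"
      by (rule leibniz_rule_field_derivative[OF fx int contparam[OF cdG] x convex_ball])
    then show ?thesis using at_within_open[OF x ob] by (simp add: cbox_interval)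
  qed
  have D: "\<And>x. x \<in> ball 0 \<rho> \<Longrightarrow> (\<lambda>x. integral {0..1} (\<lambda>t. t ^ m * G (t * x))) differentiable at x"
    using der real_differentiable_def by blast
  have C: "Ck_on n (ball 0 \<rho>) (\<lambda>x. integral {0..1} (\<lambda>t. t ^ Suc m * deriv G (t * x)))"
    using Suc.IH[of "deriv G" "Suc m"] Suc.prems unfolding Ck_Suc by blast
  have E: "\<And>x. x \<in> ball 0 \<rho> \<Longrightarrow> deriv (\<lambda>x. integral {0..1} (\<lambda>t. t ^ m * G (t * x))) x =
     integral {0..1} (\<lambda>t. t ^ Suc m * deriv G (t * x))"
    using der DERIV_imp_deriv by blast
  show ?case using Ck_SucI[OF ob D C E] .
qed

lemma hadamard_id:
  fixes g :: "real \<Rightarrow> real"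
  assumes "Ck_on 1 (ball 0 \<rho>) g" "g 0 = 0" "x \<in> ball 0 \<rho>"
  shows "x * integral {0..1} (\<lambda>t. t ^ 0 * deriv g (t * x)) = g x"
proof -
  have dg: "\<And>y. y \<in> ball 0 \<rho> \<Longrightarrow> (g has_real_derivative deriv g y) (at y)"
    using assms(1) by (auto simp: Ck_Suc[of 0, simplified] DERIV_deriv_iff_real_differentiable)
  have vd: "((\<lambda>t. g (t * x)) has_vector_derivative x * deriv g (t * x)) (at t within {0..1})"
    if "t \<in> {0..1}" for t
  proof -
    have tx: "t * x \<in> ball 0 \<rho>" using ball_mult_in[OF assms(3) that] .
    have lin: "((\<lambda>t. t * x) has_real_derivative x) (at t)" by (auto intro!: derivative_eq_intros)
    from DERIV_chain2[OF dg[OF tx] lin]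
    have "((\<lambda>t. g (t * x)) has_real_derivative x * deriv g (t * x)) (at t)"
      by (rule DERIV_cong) (simp add: algebra_simps)
    then show ?thesis
      by (simp add: has_real_derivative_iff_has_vector_derivative[symmetric] has_field_derivative_at_within)
  qed
  have "((\<lambda>t. x * deriv g (t * x)) has_integral (g (1 * x) - g (0 * x))) {0..1}"
    by (rule fundamental_theorem_of_calculus[OF _ vd]) auto
  then have "((\<lambda>t. x * deriv g (t * x)) has_integral g x) {0..1}" using assms(2) by simp
  from integral_unique[OF this] show ?thesis by simp
qed



lemma funpow_deriv_Suc: "(deriv ^^ Suc i) F = (deriv ^^ i) (deriv F)"
  by (simp add: funpow_Suc_right del: funpow.simps)

lemma bounded_img_add:
  assumes "bounded (G ` S)" "bounded (H ` S)" "\<And>x. x \<in> S \<Longrightarrow> F x = G x + (H x::real)"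
  shows "bounded (F ` S)"
proof -
  obtain b1 where b1: "\<forall>x\<in>S. norm (G x) \<le> b1" using assms(1) unfolding bounded_iff by auto
  obtain b2 where b2: "\<forall>x\<in>S. norm (H x) \<le> b2" using assms(2) unfolding bounded_iff by auto
  have "\<forall>y\<in>F ` S. norm y \<le> b1 + b2"
  proof
    fix y assume "y \<in> F ` S"
    then obtain x where x: "x \<in> S" "y = F x" by auto
    have "norm (G x + H x) \<le> norm (G x) + norm (H x)" by (rule norm_triangle_ineq)
    then show "norm y \<le> b1 + b2" using b1 b2 x assms(3)[OF x(1)] by fastforce
  qed
  then show ?thesis unfolding bounded_iff by blast
qed

lemma bounded_img_mult:
  assumes "bounded (G ` S)" "bounded (H ` S)"
  shows "bounded ((\<lambda>x. G x * (H x::real)) ` S)"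
proof -
  obtain b1 where b1: "\<forall>x\<in>S. norm (G x) \<le> b1" using assms(1) unfolding bounded_iff by auto
  obtain b2 where b2: "\<forall>x\<in>S. norm (H x) \<le> b2" using assms(2) unfolding bounded_iff by auto
  have "\<forall>y\<in>(\<lambda>x. G x * H x) ` S. norm y \<le> b1 * b2"
  proof
    fix y assume "y \<in> (\<lambda>x. G x * H x) ` S"
    then obtain x where x: "x \<in> S" "y = G x * H x" by auto
    have "norm (G x * H x) = norm (G x) * norm (H x)" by (simp add: abs_mult)
    also have "\<dots> \<le> b1 * b2" using b1 b2 x(1) by (intro mult_mono) auto
    finally show "norm y \<le> b1 * b2" using x by simp
  qed
  then show ?thesis unfolding bounded_iff by blast
qed

lemma hd_add:
  assumes "open U"
  shows "Ck_on j U A \<Longrightarrow> Ck_on j U B \<Longrightarrow> x \<in> U \<Longrightarrow>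
    (deriv ^^ j) (\<lambda>x. A x + B x) x = (deriv ^^ j) A x + (deriv ^^ j) B x"
proof (induction j arbitrary: A B x)
  case 0 then show ?case by simp
next
  case (Suc j)
  have ev: "\<forall>\<^sub>F y in nhds x. deriv (\<lambda>x. A x + B x) y = deriv A y + deriv B y"
  proof -
    have "\<forall>y\<in>U. deriv (\<lambda>x. A x + B x) y = deriv A y + deriv B y"
      using Suc.prems by (auto simp: Ck_Suc rdiff_fd)
    then show ?thesis unfolding eventually_nhds using assms Suc.prems(3) by blast
  qed
  have "(deriv ^^ Suc j) (\<lambda>x. A x + B x) x = (deriv ^^ j) (deriv (\<lambda>x. A x + B x)) x"
    by (simp add: funpow_Suc_right del: funpow.simps)
  also have "\<dots> = (deriv ^^ j) (\<lambda>y. deriv A y + deriv B y) x"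
    by (rule higher_deriv_cong_ev[OF ev refl])
  also have "\<dots> = (deriv ^^ j) (deriv A) x + (deriv ^^ j) (deriv B) x"
    using Suc.IH[of "deriv A" "deriv B" x] Suc.prems by (auto simp: Ck_Suc)
  also have "\<dots> = (deriv ^^ Suc j) A x + (deriv ^^ Suc j) B x"
    by (simp add: funpow_Suc_right del: funpow.simps)
  finally show ?case .
qed

lemma bounded_prod:
  assumes "open U" "S \<subseteq> U"
  shows "Ck_on j U A \<Longrightarrow> Ck_on j U B \<Longrightarrow> (\<forall>i\<le>j. bounded ((deriv ^^ i) A ` S)) \<Longrightarrow>
     (\<forall>i\<le>j. bounded ((deriv ^^ i) B ` S)) \<Longrightarrow> bounded ((deriv ^^ j) (\<lambda>x. A x * B x) ` S)"
proof (induction j arbitrary: A B)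
  case 0
  then show ?case using bounded_img_mult[of A S B] by simp
next
  case (Suc j)
  have A1: "Ck_on j U (deriv A)" and B1: "Ck_on j U (deriv B)" using Suc.prems by (auto simp: Ck_Suc)
  have A0: "Ck_on j U A" and B0: "Ck_on j U B" using Suc.prems Ck_mono[of "Suc j" U] by auto
  have dA: "\<forall>i\<le>j. bounded ((deriv ^^ i) (deriv A) ` S)" using Suc.prems(3) funpow_deriv_Suc[of _ A]
    by (metis Suc_le_mono)
  have dB: "\<forall>i\<le>j. bounded ((deriv ^^ i) (deriv B) ` S)" using Suc.prems(4) funpow_deriv_Suc[of _ B]
    by (metis Suc_le_mono)
  have bA: "\<forall>i\<le>j. bounded ((deriv ^^ i) A ` S)" and bB: "\<forall>i\<le>j. bounded ((deriv ^^ i) B ` S)"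
    using Suc.prems(3,4) by auto
  have b1: "bounded ((deriv ^^ j) (\<lambda>x. deriv A x * B x) ` S)" using Suc.IH[OF A1 B0 dA bB] .
  have b2: "bounded ((deriv ^^ j) (\<lambda>x. A x * deriv B x) ` S)" using Suc.IH[OF A0 B1 bA dB] .
  have eq: "(deriv ^^ Suc j) (\<lambda>x. A x * B x) x =
      (deriv ^^ j) (\<lambda>x. deriv A x * B x) x + (deriv ^^ j) (\<lambda>x. A x * deriv B x) x" if x: "x \<in> S" for x
  proof -
    have xU: "x \<in> U" using x assms by auto
    have ev: "\<forall>\<^sub>F y in nhds x. deriv (\<lambda>x. A x * B x) y = deriv A y * B y + A y * deriv B y"
    proof -
      have "\<forall>y\<in>U. deriv (\<lambda>x. A x * B x) y = deriv A y * B y + A y * deriv B y"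
        using Suc.prems by (auto simp: Ck_Suc rdiff_fd)
      then show ?thesis unfolding eventually_nhds using assms xU by blast
    qed
    have "(deriv ^^ Suc j) (\<lambda>x. A x * B x) x = (deriv ^^ j) (deriv (\<lambda>x. A x * B x)) x"
      by (simp add: funpow_Suc_right del: funpow.simps)
    also have "\<dots> = (deriv ^^ j) (\<lambda>y. deriv A y * B y + A y * deriv B y) x"
      by (rule higher_deriv_cong_ev[OF ev refl])
    also have "\<dots> = (deriv ^^ j) (\<lambda>x. deriv A x * B x) x + (deriv ^^ j) (\<lambda>x. A x * deriv B x) x"
      by (rule hd_add[OF assms(1) Ck_mult[OF assms(1) A1 B0] Ck_mult[OF assms(1) A0 B1] xU])
    finally show ?thesis .
  qed
  show ?case by (rule bounded_img_add[OF b1 b2 eq])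
qed



lemma ham_gam: "Ham a b f (gam a b \<sigma> \<phi> \<psi> s) = f (-4 * a\<^sup>2 * s * \<phi> s) (-4 * b\<^sup>2 * \<sigma> * s * \<psi> s) / 2"
proof -
  have "gam a b \<sigma> \<phi> \<psi> s = (s + \<phi> s, \<sigma> * s + \<psi> s, a * s - a * \<phi> s, - (b * \<sigma> * s) + b * \<psi> s)"
    by (simp add: gam_def vv1_def vv2_def vv3_def vv4_def algebra_simps)
  moreover have "(a * s - a * \<phi> s)\<^sup>2 - a\<^sup>2 * (s + \<phi> s)\<^sup>2 = -4 * a\<^sup>2 * s * \<phi> s"
    by (simp add: power2_eq_square algebra_simps)
  moreover have "(- (b * \<sigma> * s) + b * \<psi> s)\<^sup>2 - b\<^sup>2 * (\<sigma> * s + \<psi> s)\<^sup>2 = -4 * b\<^sup>2 * \<sigma> * s * \<psi> s"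
    by (simp add: power2_eq_square algebra_simps)
  ultimately show ?thesis by (simp add: Ham_def)
qed

theorem lemma3p5:
  fixes a b l \<sigma> :: real and k :: nat
    and f :: "real \<Rightarrow> real \<Rightarrow> real" and \<phi> :: "real \<Rightarrow> real"
  assumes "a > 0" and "b > 0"
    and "smooth2 f" and "f 0 0 = 0" and "pdu f 0 0 = 1" and "pdv f 0 0 = 1"
    and "\<sigma> \<in> {1, -1}"
    and "k \<ge> 1" and "l \<le> real k"
    and "Ck_on k UNIV \<phi>" and "vanishes_to_order k l UNIV \<phi>"
  shows "\<exists>\<delta>>0. \<exists>\<psi>.
           (\<forall>s\<in>ball 0 \<delta>. Ham a b f (gam a b \<sigma> \<phi> \<psi> s) = 0) \<and>
           (\<forall>\<psi>'. continuous (at 0) \<psi>' \<and>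
                  (\<forall>\<^sub>F s in nhds 0. Ham a b f (gam a b \<sigma> \<phi> \<psi>' s) = 0) \<longrightarrow>
                  (\<forall>\<^sub>F s in nhds 0. \<psi>' s = \<psi> s)) \<and>
           Ck_on k (ball 0 \<delta>) \<psi> \<and>
           vanishes_to_order k l (ball 0 \<delta>) \<psi> \<and>
           (f = (\<lambda>u v. u + v) \<longrightarrow> (\<forall>s\<in>ball 0 \<delta>. \<psi> s = - \<sigma> * a\<^sup>2 / b\<^sup>2 * \<phi> s))"
proof -
  note a = assms(1) and b = assms(2) and sm = assms(3) and f0 = assms(4) and fu0 = assms(5)
    and fv0 = assms(6) and sig = assms(7) and k1 = assms(8) and lk = assms(9) and phiCk = assms(10)
    and van = assms(11)
  obtain \<rho> r g where \<rho>: "\<rho> > 0" and r: "r > 0" and \<rho>r: "\<rho> \<le> r"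
    and gz: "\<And>u. \<bar>u\<bar> < \<rho> \<Longrightarrow> f u (g u) = 0"
    and U1: "\<And>u v. \<bar>u\<bar> < \<rho> \<Longrightarrow> \<bar>v\<bar> \<le> r \<Longrightarrow> f u v = 0 \<Longrightarrow> v = g u"
    and gCk: "\<And>n. Ck_on n (ball 0 \<rho>) g" and g0: "g 0 = 0" and dg0: "deriv g 0 = - pdu f 0 0"
    using implicit[OF sm f0 fv0] by blast
  have sig2: "\<sigma> * \<sigma> = 1" and sig0: "\<sigma> \<noteq> 0" using sig by auto
  define c where "c = \<sigma> * a\<^sup>2 / b\<^sup>2"
  define h where "h = (\<lambda>x. integral {0..1} (\<lambda>t. t ^ 0 * deriv g (t * x)))"
  have ball_iff: "u \<in> ball 0 R \<longleftrightarrow> \<bar>u\<bar> < R" for u R :: real by (simp add: dist_real_def)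
  have hCk: "Ck_on k (ball 0 \<rho>) h"
    unfolding h_def by (rule Ck_integral) (use gCk[of "Suc k"] in \<open>simp add: Ck_Suc\<close>)
  have hid: "\<And>x. \<bar>x\<bar> < \<rho> \<Longrightarrow> x * h x = g x"
    unfolding h_def using hadamard_id[OF gCk[of 1] g0] ball_iff by blast
  have h0: "h 0 = -1" unfolding h_def using dg0 fu0 by simp
  define u where "u = (\<lambda>s. -4 * a\<^sup>2 * s * \<phi> s)"
  have uCk: "Ck_on k UNIV u"
    unfolding u_def by (intro Ck_mult Ck_cmult Ck_id phiCk open_UNIV)
  have u0: "u 0 = 0" by (simp add: u_def)
  have ucont: "isCont u 0" using Ck_cont[OF uCk, of 0] by (simp add: continuous_on_eq_continuous_at)
  obtain \<delta>0 where \<delta>0: "\<delta>0 > 0" and u\<delta>0: "\<And>s. \<bar>s\<bar> < \<delta>0 \<Longrightarrow> \<bar>u s\<bar> < \<rho>"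
    using ucont \<rho> u0 unfolding continuous_at_eps_delta by (auto simp: dist_real_def)
  define \<delta> where "\<delta> = \<delta>0 / 2"
  have \<delta>: "\<delta> > 0" "\<delta> < \<delta>0" using \<delta>0 by (auto simp: \<delta>_def)
  define \<psi> where "\<psi> = (\<lambda>s. c * \<phi> s * h (u s))"
  have key: "-4 * b\<^sup>2 * \<sigma> * s * \<psi> s = u s * h (u s)" for s
    using b sig2 by (simp add: \<psi>_def c_def u_def field_simps)
  have ob0: "open (ball (0::real) \<delta>0)" by simp
  have img: "u ` ball 0 \<delta>0 \<subseteq> ball 0 \<rho>" using u\<delta>0 by (auto simp: ball_iff)
  have huCk: "Ck_on k (ball 0 \<delta>0) (\<lambda>s. h (u s))"
    by (rule Ck_compose[OF ob0 _ hCk Ck_set_mono[OF uCk] img]) auto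
  have P1: "\<forall>s\<in>ball 0 \<delta>. Ham a b f (gam a b \<sigma> \<phi> \<psi> s) = 0"
  proof
    fix s :: real assume "s \<in> ball 0 \<delta>"
    then have us: "\<bar>u s\<bar> < \<rho>" using u\<delta>0 \<delta> by (simp add: ball_iff)
    have "Ham a b f (gam a b \<sigma> \<phi> \<psi> s) = f (u s) (g (u s)) / 2"
      unfolding ham_gam key[of s] hid[OF us] by (simp add: u_def)
    then show "Ham a b f (gam a b \<sigma> \<phi> \<psi> s) = 0" using gz[OF us] by simp
  qed
  have \<psi>Ck0: "Ck_on k (ball 0 \<delta>0) \<psi>"
    unfolding \<psi>_def by (intro Ck_mult[OF ob0] Ck_cmult[OF ob0] huCk Ck_set_mono[OF phiCk]) auto
  have P3: "Ck_on k (ball 0 \<delta>) \<psi>" using \<delta> by (intro Ck_set_mono[OF \<psi>Ck0] subset_ball) simp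
  have P2: "\<forall>\<psi>'. continuous (at 0) \<psi>' \<and> (\<forall>\<^sub>F s in nhds 0. Ham a b f (gam a b \<sigma> \<phi> \<psi>' s) = 0) \<longrightarrow>
                  (\<forall>\<^sub>F s in nhds 0. \<psi>' s = \<psi> s)"
  proof (intro allI impI, elim conjE)
    fix \<psi>' assume c': "continuous (at 0) \<psi>'" and ev: "\<forall>\<^sub>F s in nhds 0. Ham a b f (gam a b \<sigma> \<phi> \<psi>' s) = 0"
    define v' where "v' = (\<lambda>s. -4 * b\<^sup>2 * \<sigma> * s * \<psi>' s)"
    have "isCont v' 0" unfolding v'_def using c' by (intro continuous_intros) auto
    then obtain d where d: "d > 0" "\<And>x. dist x 0 < d \<Longrightarrow> dist (v' x) (v' 0) < r"
      using r unfolding continuous_at_eps_delta by blast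
    then have "\<forall>\<^sub>F s in nhds 0. dist (v' s) (v' 0) < r"
      unfolding eventually_nhds by (intro exI[of _ "ball 0 d"]) (auto simp: dist_commute)
    then have ev1: "\<forall>\<^sub>F s in nhds 0. \<bar>v' s\<bar> < r" by (simp add: v'_def dist_real_def)
    have ev2: "\<forall>\<^sub>F s in nhds (0::real). \<bar>s\<bar> < \<delta>0"
      unfolding eventually_nhds by (intro exI[of _ "ball 0 \<delta>0"]) (auto simp: ball_iff \<delta>0)
    have ev3: "\<forall>\<^sub>F s in nhds 0. s \<noteq> 0 \<longrightarrow> \<psi>' s = \<psi> s"
      using ev ev1 ev2
    proof eventually_elim
      case (elim s)
      show ?case
      proof
        assume s0: "s \<noteq> 0"
        have us: "\<bar>u s\<bar> < \<rho>" using u\<delta>0 elim(3) .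
        have "f (u s) (v' s) = 0" using elim(1) unfolding ham_gam by (simp add: u_def v'_def)
        then have "v' s = g (u s)" using U1[OF us] elim(2) by simp
        also have "\<dots> = -4 * b\<^sup>2 * \<sigma> * s * \<psi> s" using hid[OF us] key[of s] by simp
        finally have "-4 * b\<^sup>2 * \<sigma> * s * \<psi>' s = -4 * b\<^sup>2 * \<sigma> * s * \<psi> s" by (simp add: v'_def)
        then show "\<psi>' s = \<psi> s" using s0 sig0 b by simp
      qed
    qed
    have "\<forall>\<^sub>F s in at 0. \<psi>' s = \<psi> s" using ev3 by (simp add: eventually_at_filter)
    moreover have "(\<psi>' \<longlongrightarrow> \<psi>' 0) (at 0)" using c' by (simp add: isCont_def)
    moreover have "(\<psi> \<longlongrightarrow> \<psi> 0) (at 0)"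
    proof -
      have "continuous_on (ball 0 \<delta>0) \<psi>" using Ck_cont[OF \<psi>Ck0, of 0] by simp
      then have "isCont \<psi> 0" using \<delta>0 by (simp add: continuous_on_eq_continuous_at)
      then show ?thesis by (simp add: isCont_def)
    qed
    ultimately have "\<psi>' 0 = \<psi> 0"
      by (metis (mono_tags, lifting) tendsto_cong tendsto_unique trivial_limit_at)
    with ev3 show "\<forall>\<^sub>F s in nhds 0. \<psi>' s = \<psi> s"
      by (auto elim: eventually_mono)
  qed
  obtain \<phi>bar where pb1: "\<forall>s\<in>UNIV - {0}. \<phi> s = \<phi>bar s * \<bar>s\<bar> powr l"
    and pb2: "Ck_on k (UNIV - {0}) \<phi>bar"
    and pb3: "\<forall>j::nat. real j \<le> l \<longrightarrow> bounded (((deriv ^^ j) \<phi>bar) ` ((UNIV \<inter> {-1..1}) - {0}))"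
    using van unfolding vanishes_to_order_def by blast
  define B where "B = (\<lambda>s. c * h (u s))"
  have BCk: "Ck_on k (ball 0 \<delta>0) B" unfolding B_def by (rule Ck_cmult[OF ob0 huCk])
  define V where "V = ball (0::real) \<delta>0 - {0}"
  have oV: "open V" by (simp add: V_def open_Diff)
  define S where "S = (ball (0::real) \<delta> \<inter> {-1..1}) - {0}"
  have SV: "S \<subseteq> V" using \<delta> by (auto simp: S_def V_def ball_iff)
  have P4: "vanishes_to_order k l (ball 0 \<delta>) \<psi>"
    unfolding vanishes_to_order_def
  proof (intro exI[of _ "\<lambda>s. \<phi>bar s * B s"] conjI allI impI ballI)
    fix s :: real assume "s \<in> ball 0 \<delta> - {0}"
    then show "\<psi> s = \<phi>bar s * B s * \<bar>s\<bar> powr l" using pb1 by (simp add: \<psi>_def B_def)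
  next
    have "Ck_on k V (\<lambda>s. \<phi>bar s * B s)"
      by (rule Ck_mult[OF oV Ck_set_mono[OF pb2] Ck_set_mono[OF BCk]]) (auto simp: V_def)
    then show "Ck_on k (ball 0 \<delta> - {0}) (\<lambda>s. \<phi>bar s * B s)"
      by (rule Ck_set_mono) (use \<delta> in \<open>auto simp: V_def ball_iff\<close>)
  next
    fix j :: nat assume jl: "real j \<le> l"
    then have jk: "j \<le> k" using lk by simp
    have bphi: "\<forall>i\<le>j. bounded ((deriv ^^ i) \<phi>bar ` S)"
    proof (intro allI impI)
      fix i assume "i \<le> j"
      then have "real i \<le> l" using jl by simp
      then have "bounded ((deriv ^^ i) \<phi>bar ` ((UNIV \<inter> {-1..1}) - {0}))" using pb3 by blast
      then show "bounded ((deriv ^^ i) \<phi>bar ` S)"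
        by (rule bounded_subset) (auto simp: S_def)
    qed
    have bB: "\<forall>i\<le>j. bounded ((deriv ^^ i) B ` S)"
    proof (intro allI impI)
      fix i assume "i \<le> j"
      then have "continuous_on (ball 0 \<delta>0) ((deriv ^^ i) B)" using Ck_cont[OF BCk] jk by simp
      moreover have cb: "cball 0 \<delta> \<subseteq> ball (0::real) \<delta>0" using \<delta> by (auto simp: dist_real_def)
      ultimately have "continuous_on (cball 0 \<delta>) ((deriv ^^ i) B)" by (rule continuous_on_subset)
      then have "compact ((deriv ^^ i) B ` cball 0 \<delta>)" by (rule compact_continuous_image) simp
      then have "bounded ((deriv ^^ i) B ` cball 0 \<delta>)" by (rule compact_imp_bounded)
      then show "bounded ((deriv ^^ i) B ` S)"
        by (rule bounded_subset) (auto simp: S_def dist_real_def)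
    qed
    have "bounded ((deriv ^^ j) (\<lambda>x. \<phi>bar x * B x) ` S)"
      by (rule bounded_prod[OF oV SV _ _ bphi bB])
         (use Ck_mono[OF Ck_set_mono[OF pb2] jk] Ck_mono[OF Ck_set_mono[OF BCk] jk] in \<open>auto simp: V_def\<close>)
    then show "bounded ((deriv ^^ j) (\<lambda>s. \<phi>bar s * B s) ` (ball 0 \<delta> \<inter> {-1..1} - {0}))"
      by (simp add: S_def)
  qed
  have P5: "f = (\<lambda>u v. u + v) \<longrightarrow> (\<forall>s\<in>ball 0 \<delta>. \<psi> s = - \<sigma> * a\<^sup>2 / b\<^sup>2 * \<phi> s)"
  proof (intro impI ballI)
    fix s :: real assume ff: "f = (\<lambda>u v. u + v)" and "s \<in> ball 0 \<delta>"
    then have us: "\<bar>u s\<bar> < \<rho>" using u\<delta>0 \<delta> by (simp add: ball_iff)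
    have hu: "h (u s) = -1"
    proof (cases "u s = 0")
      case True then show ?thesis using h0 by simp
    next
      case False
      have "- u s = g (u s)" using U1[OF us, of "- u s"] us \<rho>r ff by simp
      then have e1: "u s * h (u s) = - u s" using hid[OF us] by simp
      have "h (u s) = (u s * h (u s)) / u s" using False by simp
      also have "\<dots> = - u s / u s" using e1 by simp
      also have "\<dots> = -1" using False by simp
      finally show ?thesis .
    qed
    show "\<psi> s = - \<sigma> * a\<^sup>2 / b\<^sup>2 * \<phi> s" by (simp add: \<psi>_def hu c_def)
  qed
  show ?thesis using \<delta> P1 P2 P3 P4 P5 by blast
qed


end
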